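(* Let $p\ge1$, $q\ge0$, and for $i=1,\dots,r$ let $f_i:\mathbb{R}^p\times\mathbb{R}^q\to\mathbb{R}$ be permutation-invariant with respect to its first argument. Let $\bar S=\{(M,z)\in\mathcal{S}^p\times\mathbb{R}^q\mid f_i(\lambda(M),z)\le1,\ i=1,\dots,r\}$ and $S=\{(x,z)\in\mathbb{R}^p\times\mathbb{R}^q\mid f_i(x,z)\le1,\ i=1,\dots,r\}$. Then $$\mathrm{conv}(\bar S)=\{(M,z)\in\mathcal{S}^p\times\mathbb{R}^q\mid(\lambda(M),z)\in\mathrm{conv}(S)\}.$$
   Context: $\mathcal{S}^p$ is the space of real symmetric $p\times p$ matrices and $\lambda(M)\in\mathbb{R}^p$ is the vector of eigenvalues of $M$ in nonincreasing order. $f(x,z)$ is permutation-invariant with respect to $x$ if $f(Px,z)=f(x,z)$ for every permutation matrix $P$. *)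

theory Defs
  imports "HOL-Analysis.Analysis" "HOL-Computational_Algebra.Polynomial"
begin

definition symmetric_matrix :: "real^'p^'p \<Rightarrow> bool" where
  "symmetric_matrix M \<longleftrightarrow> transpose M = M"

definition char_poly :: "real^'p^'p \<Rightarrow> real poly" where
  "char_poly M = det (\<chi> i j. (if i = j then [:0, 1:] else 0) - [:M $ i $ j:])"

text \<open>Vector of eigenvalues (with multiplicity) in nonincreasing order; the
  index type is linearly ordered, its k-th smallest index carries the k-th
  largest eigenvalue.\<close>
definition eigvals :: "real^('p::{finite,linorder})^('p::{finite,linorder}) \<Rightarrow> real^('p::{finite,linorder})" where
  "eigvals M = (\<chi> i. rev (sorted_list_of_multiset (proots (char_poly M))) ! card {j. j < i})"

definition perm_matrix :: "('p \<Rightarrow> 'p) \<Rightarrow> real^'p^'p" where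
  "perm_matrix \<sigma> = (\<chi> i j. if \<sigma> i = j then 1 else 0)"

definition is_perm_matrix :: "real^'p^'p \<Rightarrow> bool" where
  "is_perm_matrix P \<longleftrightarrow> (\<exists>\<sigma>. \<sigma> permutes UNIV \<and> P = perm_matrix \<sigma>)"

definition perm_invariant :: "(real^'p \<Rightarrow> 'z \<Rightarrow> real) \<Rightarrow> bool" where
  "perm_invariant f \<longleftrightarrow> (\<forall>P x z. is_perm_matrix P \<longrightarrow> f (P *v x) z = f x z)"

end

theory Submission
  imports Defs "HOL-Combinatorics.List_Permutation"
begin

lemma layer:
  fixes T :: "'p::finite \<Rightarrow> 'p \<Rightarrow> real" and e :: "'p \<Rightarrow> real"
  assumes nn: "\<And>j m. T j m \<ge> 0" and col: "\<And>m. (\<Sum>j\<in>UNIV. T j m) = 1"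
    and row: "\<And>j. (\<Sum>m\<in>UNIV. T j m) = 1"
    and up: "\<And>m. m \<in> U \<Longrightarrow> e m \<ge> t" and lo: "\<And>m. m \<notin> U \<Longrightarrow> e m \<le> t"
  shows "(\<Sum>j\<in>U. \<Sum>m\<in>UNIV. T j m * e m) \<le> (\<Sum>j\<in>U. e j)"
proof -
  define c where "c m = (\<Sum>j\<in>U. T j m)" for m
  have c1: "c m \<le> 1" for m
  proof -
    have "c m \<le> (\<Sum>j\<in>UNIV. T j m)" unfolding c_def by (rule sum_mono2) (auto simp: nn)
    then show ?thesis using col by simp
  qed
  have c0: "c m \<ge> 0" for m unfolding c_def by (simp add: nn sum_nonneg)
  have lhs: "(\<Sum>j\<in>U. \<Sum>m\<in>UNIV. T j m * e m) = (\<Sum>m\<in>UNIV. c m * e m)"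
    unfolding c_def by (subst sum.swap) (simp add: sum_distrib_right)
  have sc: "(\<Sum>m\<in>UNIV. c m) = real (card U)"
    unfolding c_def by (subst sum.swap) (simp add: row)
  have split: "(\<Sum>m\<in>UNIV. g m) = (\<Sum>m\<in>U. g m) + (\<Sum>m\<in>-U. g m)" for g :: "'p \<Rightarrow> real"
    by (metis Compl_eq_Diff_UNIV finite sum.subset_diff top_greatest add.commute)
  have a: "(\<Sum>m\<in>-U. c m * e m) \<le> (\<Sum>m\<in>-U. c m * t)"
    by (rule sum_mono) (simp add: c0 lo mult_left_mono)
  have b: "(\<Sum>m\<in>U. (1 - c m) * t) \<le> (\<Sum>m\<in>U. (1 - c m) * e m)"
    by (rule sum_mono) (simp add: c1 up mult_left_mono)
  have eq: "(\<Sum>m\<in>-U. c m) = (\<Sum>m\<in>U. (1 - c m))"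
    using sc split[of c] by (simp add: sum_subtractf)
  have "(\<Sum>m\<in>UNIV. c m * e m) = (\<Sum>m\<in>U. c m * e m) + (\<Sum>m\<in>-U. c m * e m)" by (rule split)
  also have "\<dots> \<le> (\<Sum>m\<in>U. c m * e m) + (\<Sum>m\<in>U. (1 - c m) * e m)"
    using a b eq by (simp add: sum_distrib_right[symmetric])
  also have "\<dots> = (\<Sum>m\<in>U. e m)" by (simp add: sum.distrib[symmetric] algebra_simps)
  finally show ?thesis using lhs by simp
qed


lemma rearr_aux:
  fixes T :: "'p::finite \<Rightarrow> 'p \<Rightarrow> real" and e :: "'p \<Rightarrow> real"
  assumes nn: "\<And>j m. T j m \<ge> 0" and col: "\<And>m. (\<Sum>j\<in>UNIV. T j m) = 1"
    and row: "\<And>j. (\<Sum>m\<in>UNIV. T j m) = 1"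
  shows "card {j. a j > Min (range a)} = n \<Longrightarrow> (\<And>j l. a j < a l \<Longrightarrow> e j \<le> e l) \<Longrightarrow>
     (\<Sum>j\<in>UNIV. \<Sum>m\<in>UNIV. T j m * a j * e m) \<le> (\<Sum>j\<in>UNIV. a j * e j)"
proof (induction n arbitrary: a rule: less_induct)
  case (less n a)
  define m0 where "m0 = Min (range a)"
  define U where "U = {j. a j > m0}"
  have am0: "a j \<ge> m0" for j unfolding m0_def by simp
  obtain j0 where j0: "a j0 = m0" unfolding m0_def
    by (metis (mono_tags, lifting) Min_in UNIV_not_empty finite finite_imageI image_iff image_is_empty)
  show ?case
  proof (cases "U = {}")
    case True
    then have ac: "a j = m0" for j using am0[of j] unfolding U_def
      by (metis (mono_tags) empty_Collect_eq order_less_le)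
    have "(\<Sum>j\<in>UNIV. \<Sum>m\<in>UNIV. T j m * a j * e m) = (\<Sum>m\<in>UNIV. (\<Sum>j\<in>UNIV. T j m) * m0 * e m)"
      by (subst sum.swap) (simp add: ac sum_distrib_right)
    also have "\<dots> = (\<Sum>j\<in>UNIV. a j * e j)" by (simp add: col ac)
    finally show ?thesis by simp
  next
    case False
    define m1 where "m1 = Min (a ` U)"
    have m1U: "m1 \<in> a ` U" unfolding m1_def using False by (intro Min_in) auto
    have m1le: "j \<in> U \<Longrightarrow> m1 \<le> a j" for j unfolding m1_def by simp
    have m1gt: "m1 > m0" using m1U unfolding U_def by auto
    define \<delta> where "\<delta> = m1 - m0"
    define a' where "a' j = (if j \<in> U then a j - \<delta> else a j)" for j
    have a'ge: "a' j \<ge> m0" for j using m1le[of j] am0[of j] unfolding a'_def \<delta>_def by auto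
    have Mina': "Min (range a') = m0"
    proof (rule antisym)
      have "j0 \<notin> U" using j0 unfolding U_def by simp
      then have "a' j0 = m0" using j0 unfolding a'_def by simp
      then show "Min (range a') \<le> m0" by (metis Min_le finite finite_imageI rangeI)
      show "m0 \<le> Min (range a')" using a'ge by (simp add: Min_ge_iff)
    qed
    have sub: "{j. a' j > m0} \<subset> U"
    proof
      show "{j. a' j > m0} \<subseteq> U" unfolding U_def a'_def using am0 by (auto split: if_splits)
      obtain j1 where "j1 \<in> U" "a j1 = m1" using m1U by auto
      then have "j1 \<notin> {j. a' j > m0}" unfolding a'_def \<delta>_def by simp
      then show "{j. a' j > m0} \<noteq> U" using \<open>j1 \<in> U\<close> by blast
    qed
    have lt: "card {j. a' j > Min (range a')} < n"
    proof -
      have "card {j. a' j > m0} < card U" by (rule psubset_card_mono[OF _ sub]) simp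
      then show ?thesis using less.prems(1) unfolding Mina' m0_def[symmetric] U_def[symmetric] by simp
    qed
    have sim': "e j \<le> e l" if "a' j < a' l" for j l
    proof -
      have "a j < a l" using that a'ge[of j] a'ge[of l] am0[of l] unfolding a'_def U_def
        by (auto split: if_splits)
      then show ?thesis by (rule less.prems(2))
    qed
    have IH: "(\<Sum>j\<in>UNIV. \<Sum>m\<in>UNIV. T j m * a' j * e m) \<le> (\<Sum>j\<in>UNIV. a' j * e j)"
      using less.IH[OF lt refl sim'] .
    obtain t where tU: "\<And>m. m \<in> U \<Longrightarrow> e m \<ge> t" and tnU: "\<And>m. m \<notin> U \<Longrightarrow> e m \<le> t"
    proof
      show "m \<in> U \<Longrightarrow> e m \<ge> Min (e ` U)" for m by simp
      fix m assume "m \<notin> U"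
      then have am: "a m = m0" using am0[of m] unfolding U_def by simp
      have "e m \<le> e j" if "j \<in> U" for j using that am by (intro less.prems(2)) (simp add: U_def)
      then show "e m \<le> Min (e ` U)" using False by (simp add: Min_ge_iff)
    qed
    have L: "(\<Sum>j\<in>U. \<Sum>m\<in>UNIV. T j m * e m) \<le> (\<Sum>j\<in>U. e j)"
      by (rule layer[OF nn col row tU tnU])
    have aa: "a j = a' j + (if j \<in> U then \<delta> else 0)" for j unfolding a'_def by simp
    have e1: "(\<Sum>j\<in>UNIV. \<Sum>m\<in>UNIV. T j m * a j * e m) =
      (\<Sum>j\<in>UNIV. \<Sum>m\<in>UNIV. T j m * a' j * e m) + \<delta> * (\<Sum>j\<in>U. \<Sum>m\<in>UNIV. T j m * e m)"
    proof -
      have pt: "(\<Sum>m\<in>UNIV. T j m * a j * e m) = (\<Sum>m\<in>UNIV. T j m * a' j * e m)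
         + (if j \<in> U then \<delta> * (\<Sum>m\<in>UNIV. T j m * e m) else 0)" for j
        by (simp add: aa algebra_simps sum.distrib sum_distrib_left)
      show ?thesis unfolding pt sum.distrib by (simp add: sum.If_cases sum_distrib_left)
    qed
    have e2: "(\<Sum>j\<in>UNIV. a j * e j) = (\<Sum>j\<in>UNIV. a' j * e j) + \<delta> * (\<Sum>j\<in>U. e j)"
    proof -
      have pt: "a j * e j = a' j * e j + (if j \<in> U then \<delta> * e j else 0)" for j
        by (simp add: aa algebra_simps)
      show ?thesis unfolding pt sum.distrib by (simp add: sum.If_cases sum_distrib_left)
    qed
    have "\<delta> > 0" using m1gt unfolding \<delta>_def by simp
    then show ?thesis unfolding e1 e2 using IH L
      by (smt (verit) mult_left_mono)
  qed
qed


lemma ds_perm_ineq: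
  fixes S :: "real^'p::finite^'p" and d a :: "real^'p"
  assumes nn: "\<And>j l. S$j$l \<ge> 0" and row: "\<And>j. (\<Sum>l\<in>UNIV. S$j$l) = 1"
    and col: "\<And>l. (\<Sum>j\<in>UNIV. S$j$l) = 1"
  shows "\<exists>\<sigma>. \<sigma> permutes UNIV \<and> a \<bullet> (S *v d) \<le> a \<bullet> (\<chi> i. d$(\<sigma> i))"
proof -
  define P where "P = {\<sigma>::'p\<Rightarrow>'p. \<sigma> permutes UNIV}"
  define F where "F \<sigma> = (\<Sum>j\<in>UNIV. a$j * d$(\<sigma> j))" for \<sigma> :: "'p \<Rightarrow> 'p"
  have finP: "finite P" unfolding P_def by (rule finite_permutations) simp
  have neP: "P \<noteq> {}" unfolding P_def using permutes_id by blast
  obtain \<sigma> where \<sigma>P: "\<sigma> \<in> P" and \<sigma>max: "\<And>\<tau>. \<tau> \<in> P \<Longrightarrow> F \<tau> \<le> F \<sigma>"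
  proof -
    have "Max (F ` P) \<in> F ` P" using finP neP by (intro Max_in) auto
    then obtain \<sigma> where "\<sigma> \<in> P" "F \<sigma> = Max (F ` P)" by auto
    moreover have "\<And>\<tau>. \<tau> \<in> P \<Longrightarrow> F \<tau> \<le> Max (F ` P)" using finP by simp
    ultimately show ?thesis using that by metis
  qed
  have \<sigma>p: "\<sigma> permutes UNIV" using \<sigma>P unfolding P_def by simp
  have two: "F g = a$j * d$(g j) + a$l * d$(g l) + (\<Sum>i\<in>UNIV-{j,l}. a$i * d$(g i))"
    if "j \<noteq> l" for g j l
  proof -
    have "F g = a$j * d$(g j) + (\<Sum>i\<in>UNIV-{j}. a$i * d$(g i))"
      unfolding F_def by (rule sum.remove) auto
    also have "(\<Sum>i\<in>UNIV-{j}. a$i * d$(g i)) = a$l * d$(g l) + (\<Sum>i\<in>UNIV-{j}-{l}. a$i * d$(g i))"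
      using that by (intro sum.remove) auto
    finally show ?thesis by (simp add: Diff_insert2[symmetric] add.assoc)
  qed
  have sim: "d$(\<sigma> j) \<le> d$(\<sigma> l)" if "a$j < a$l" for j l
  proof (rule ccontr)
    assume "\<not> ?thesis"
    then have gt: "d$(\<sigma> j) > d$(\<sigma> l)" by simp
    have jl: "j \<noteq> l" using that by auto
    define \<tau> where "\<tau> = \<sigma> \<circ> Transposition.transpose j l"
    have "\<tau> permutes UNIV" unfolding \<tau>_def by (intro permutes_compose \<sigma>p permutes_swap_id) auto
    then have "F \<tau> \<le> F \<sigma>" using \<sigma>max unfolding P_def by simp
    moreover have "(\<Sum>i\<in>UNIV-{j,l}. a$i * d$(\<tau> i)) = (\<Sum>i\<in>UNIV-{j,l}. a$i * d$(\<sigma> i))"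
      unfolding \<tau>_def by (intro sum.cong) (auto simp: transpose_apply_other)
    moreover have "\<tau> j = \<sigma> l" "\<tau> l = \<sigma> j" unfolding \<tau>_def by auto
    ultimately have "a$j * d$(\<sigma> l) + a$l * d$(\<sigma> j) \<le> a$j * d$(\<sigma> j) + a$l * d$(\<sigma> l)"
      using two[OF jl, of \<tau>] two[OF jl, of \<sigma>] by simp
    moreover have "(a$l - a$j) * (d$(\<sigma> j) - d$(\<sigma> l)) > 0" using that gt by simp
    moreover have "(a$l - a$j) * (d$(\<sigma> j) - d$(\<sigma> l)) = a$l * d$(\<sigma> j) + a$j * d$(\<sigma> l) - a$j * d$(\<sigma> j) - a$l * d$(\<sigma> l)"
      by (simp add: algebra_simps)
    ultimately show False by linarith
  qed
  define T where "T j m = S$j$(\<sigma> m)" for j m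
  define e where "e m = d$(\<sigma> m)" for m
  have rT: "(\<Sum>m\<in>UNIV. T j m) = 1" for j
    using row[of j] sum.permute[OF \<sigma>p, of "\<lambda>l. S$j$l"] unfolding T_def by (simp add: o_def)
  have cT: "(\<Sum>j\<in>UNIV. T j m) = 1" for m unfolding T_def by (rule col)
  have nT: "T j m \<ge> 0" for j m unfolding T_def by (rule nn)
  have R: "(\<Sum>j\<in>UNIV. \<Sum>m\<in>UNIV. T j m * a$j * e m) \<le> (\<Sum>j\<in>UNIV. a$j * e j)"
    by (rule rearr_aux[OF nT cT rT refl]) (simp add: e_def sim)
  have "a \<bullet> (S *v d) = (\<Sum>j\<in>UNIV. a$j * (\<Sum>l\<in>UNIV. S$j$l * d$l))"
    by (simp add: inner_vec_def matrix_vector_mult_def)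
  also have "\<dots> = (\<Sum>j\<in>UNIV. a$j * (\<Sum>m\<in>UNIV. S$j$(\<sigma> m) * d$(\<sigma> m)))"
    using sum.permute[OF \<sigma>p, of "\<lambda>l. S$_$l * d$l"] by (simp add: o_def)
  also have "\<dots> = (\<Sum>j\<in>UNIV. \<Sum>m\<in>UNIV. T j m * a$j * e m)"
    unfolding T_def e_def sum_distrib_left by (simp add: ac_simps)
  also have "\<dots> \<le> a \<bullet> (\<chi> i. d$(\<sigma> i))" using R by (simp add: inner_vec_def e_def)
  finally show ?thesis using \<sigma>p by blast
qed


lemma ds_in_hull:
  fixes S :: "real^'p::finite^'p" and d :: "real^'p"
  assumes nn: "\<And>j l. S$j$l \<ge> 0" and row: "\<And>j. (\<Sum>l\<in>UNIV. S$j$l) = 1"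
    and col: "\<And>l. (\<Sum>j\<in>UNIV. S$j$l) = 1"
  shows "S *v d \<in> convex hull ((\<lambda>\<sigma>. \<chi> i. d$(\<sigma> i)) ` {\<sigma>. \<sigma> permutes UNIV})"
proof (rule ccontr)
  let ?K = "convex hull ((\<lambda>\<sigma>. \<chi> i. d$(\<sigma> i)) ` {\<sigma>::'p\<Rightarrow>'p. \<sigma> permutes UNIV})"
  assume nin: "S *v d \<notin> ?K"
  have fin: "finite {\<sigma>::'p\<Rightarrow>'p. \<sigma> permutes UNIV}" by (rule finite_permutations) simp
  have "closed ?K"
    by (intro compact_imp_closed compact_convex_hull finite_imp_compact finite_imageI fin)
  then obtain a b where ab: "inner a (S *v d) < b" "\<forall>x\<in>?K. inner a x > b"
    using separating_hyperplane_closed_point[OF convex_convex_hull _ nin] by blast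
  obtain \<sigma> where \<sigma>: "\<sigma> permutes UNIV" "(-a) \<bullet> (S *v d) \<le> (-a) \<bullet> (\<chi> i. d$(\<sigma> i))"
    using ds_perm_ineq[OF nn row col, of "-a" d] by blast
  have "(\<chi> i. d$(\<sigma> i)) \<in> ?K" using \<sigma>(1) by (intro hull_inc) auto
  then show False using ab \<sigma>(2) by force
qed


lemma sym_inner:
  fixes M :: "real^'n^'n"
  assumes "transpose M = M"
  shows "(M *v x) \<bullet> y = x \<bullet> (M *v y)"
proof -
  have "M *v x = x v* M" using vector_transpose_matrix[of x M] assms by simp
  then show ?thesis by (simp add: dot_lmul_matrix)
qed

lemma eig_exists:
  fixes M :: "real^'n^'n"
  assumes sym: "transpose M = M" and sV: "subspace V" and x0: "x0 \<in> V" "x0 \<noteq> 0"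
    and inv: "\<And>x. x \<in> V \<Longrightarrow> M *v x \<in> V"
  shows "\<exists>v\<in>V. norm v = 1 \<and> (\<exists>c. M *v v = c *\<^sub>R v)"
proof -
  define q where "q x = x \<bullet> (M *v x)" for x
  define K where "K = V \<inter> sphere 0 1"
  have "compact K" unfolding K_def
    by (rule closed_Int_compact[OF closed_subspace[OF sV]]) simp
  moreover have "K \<noteq> {}"
  proof -
    have "(inverse (norm x0)) *\<^sub>R x0 \<in> K" unfolding K_def using x0 sV
      by (simp add: subspace_mul)
    then show ?thesis by blast
  qed
  moreover have "continuous_on K q" unfolding q_def
    by (intro continuous_intros linear_continuous_on matrix_vector_mul_bounded_linear)
  ultimately obtain v where vK: "v \<in> K" and vmax: "\<And>y. y \<in> K \<Longrightarrow> q y \<le> q v"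
    using continuous_attains_sup[of K q] by blast
  have vV: "v \<in> V" and nv: "norm v = 1" using vK unfolding K_def by auto
  have vv: "v \<bullet> v = 1" using nv by (simp add: norm_eq_1)
  define c where "c = q v"
  have qhom: "q (r *\<^sub>R y) = r^2 * q y" for r y
    unfolding q_def by (simp add: matrix_vector_mult_scaleR power2_eq_square)
  have qle: "q y \<le> c * (y \<bullet> y)" if "y \<in> V" for y
  proof (cases "y = 0")
    case True then show ?thesis by (simp add: q_def)
  next
    case False
    then have "(inverse (norm y)) *\<^sub>R y \<in> K" unfolding K_def using that sV
      by (simp add: subspace_mul)
    then have "q ((inverse (norm y)) *\<^sub>R y) \<le> c" using vmax unfolding c_def by simp
    then have "(inverse (norm y))^2 * q y \<le> c" by (simp add: qhom)
    moreover have "(norm y)^2 = y \<bullet> y" by (simp add: power2_norm_eq_inner)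
    moreover have "norm y > 0" using False by simp
    ultimately show ?thesis by (simp add: field_simps power2_eq_square)
  qed
  define w where "w = M *v v - c *\<^sub>R v"
  have wV: "w \<in> V" unfolding w_def using inv[OF vV] vV sV by (simp add: subspace_diff subspace_mul)
  have Mvv: "(M *v v) \<bullet> v = c" unfolding c_def q_def by (simp add: inner_commute)
  have wv: "w \<bullet> v = 0" unfolding w_def using Mvv vv by (simp add: inner_diff_left)
  have wMv: "w \<bullet> (M *v v) = w \<bullet> w"
  proof -
    have "M *v v = w + c *\<^sub>R v" unfolding w_def by simp
    then show ?thesis using wv by (simp add: inner_add_right)
  qed
  have "w = 0"
  proof (rule ccontr)
    assume "w \<noteq> 0"
    define W where "W = w \<bullet> w"
    have Wp: "W > 0" unfolding W_def using \<open>w \<noteq> 0\<close> by simp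
    define Q where "Q = q w"
    define t where "t = W / (\<bar>c * W - Q\<bar> + 1)"
    have tp: "t > 0" unfolding t_def using Wp by simp
    define y where "y = v + t *\<^sub>R w"
    have yV: "y \<in> V" unfolding y_def using vV wV sV by (simp add: subspace_add subspace_mul)
    have yy: "y \<bullet> y = 1 + t^2 * W" unfolding y_def W_def using vv wv
      by (simp add: inner_add_left inner_add_right inner_commute power2_eq_square)
    have qy: "q y = c + 2 * t * W + t^2 * Q"
    proof -
      have "q y = v \<bullet> (M *v v) + t * (v \<bullet> (M *v w)) + t * (w \<bullet> (M *v v)) + t^2 * (w \<bullet> (M *v w))"
        unfolding q_def y_def
        by (simp add: matrix_vector_right_distrib matrix_vector_mult_scaleR inner_add_left
            inner_add_right power2_eq_square algebra_simps)
      moreover have "v \<bullet> (M *v w) = w \<bullet> (M *v v)"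
        using sym_inner[OF sym, of w v] by (simp add: inner_commute)
      ultimately show ?thesis using wMv Mvv unfolding W_def Q_def q_def
        by (simp add: inner_commute)
    qed
    have "c + 2 * t * W + t^2 * Q \<le> c * (1 + t^2 * W)" using qle[OF yV] qy yy by simp
    then have "2 * t * W \<le> t^2 * (c * W - Q)" by (simp add: algebra_simps)
    then have "2 * W \<le> t * (c * W - Q)" using tp by (simp add: power2_eq_square)
    moreover have "t * (c * W - Q) \<le> t * \<bar>c * W - Q\<bar>" using tp by (simp add: mult_left_mono)
    moreover have "t * \<bar>c * W - Q\<bar> < W"
    proof -
      have "t * \<bar>c * W - Q\<bar> = W * (\<bar>c * W - Q\<bar> / (\<bar>c * W - Q\<bar> + 1))" unfolding t_def by simp
      also have "\<dots> < W * 1" using Wp by (intro mult_strict_left_mono) auto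
      finally show ?thesis by simp
    qed
    ultimately show False using Wp by linarith
  qed
  then have "M *v v = c *\<^sub>R v" unfolding w_def by simp
  then show ?thesis using vV nv by blast
qed


lemma spectral_aux:
  fixes M :: "real^'n^'n"
  assumes sym: "transpose M = M"
  shows "dim V = n \<Longrightarrow> subspace V \<Longrightarrow> (\<forall>x\<in>V. M *v x \<in> V) \<Longrightarrow>
    \<exists>B. B \<subseteq> V \<and> pairwise orthogonal B \<and> (\<forall>b\<in>B. norm b = 1 \<and> (\<exists>c. M *v b = c *\<^sub>R b)) \<and> V \<subseteq> span B"
proof (induction n arbitrary: V rule: less_induct)
  case (less n V)
  show ?case
  proof (cases "\<exists>x\<in>V. x \<noteq> 0")
    case False
    then have "V \<subseteq> span {}" by auto
    then show ?thesis by (intro exI[of _ "{}"]) auto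
  next
    case True
    then obtain x0 where "x0 \<in> V" "x0 \<noteq> 0" by blast
    then obtain v c where vV: "v \<in> V" and nv: "norm v = 1" and Mv: "M *v v = c *\<^sub>R v"
      using eig_exists[OF sym less.prems(2)] less.prems(3) by blast
    have vv: "v \<bullet> v = 1" using nv by (simp add: norm_eq_1)
    define V' where "V' = V \<inter> {x. v \<bullet> x = 0}"
    have sV': "subspace V'" unfolding V'_def
      by (rule subspace_inter[OF less.prems(2) subspace_hyperplane])
    have inv': "\<forall>x\<in>V'. M *v x \<in> V'"
    proof
      fix x assume x: "x \<in> V'"
      have "v \<bullet> (M *v x) = (M *v v) \<bullet> x" using sym_inner[OF sym, of v x] by simp
      also have "\<dots> = 0" using x unfolding V'_def Mv by simp
      finally show "M *v x \<in> V'" using x less.prems(3) unfolding V'_def by auto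
    qed
    have "span V' \<subset> span V"
    proof -
      have "span V' = V'" using sV' by (simp add: span_eq_iff)
      moreover have "span V = V" using less.prems(2) by (simp add: span_eq_iff)
      moreover have "V' \<subset> V"
      proof (rule psubsetI)
        show "V' \<subseteq> V" unfolding V'_def by blast
        show "V' \<noteq> V"
        proof
          assume "V' = V"
          then have "v \<in> V'" using vV by simp
          then show False using vv unfolding V'_def by simp
        qed
      qed
      ultimately show ?thesis by (simp only:)
    qed
    then have "dim V' < n" using less.prems(1) by (metis dim_psubset)
    then obtain B' where B': "B' \<subseteq> V'" "pairwise orthogonal B'"
      "\<forall>b\<in>B'. norm b = 1 \<and> (\<exists>c. M *v b = c *\<^sub>R b)" "V' \<subseteq> span B'"
      using less.IH[OF _ refl sV' inv'] by blast
    define B where "B = insert v B'"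
    have "B \<subseteq> V" unfolding B_def using B'(1) vV unfolding V'_def by auto
    moreover have "pairwise orthogonal B"
      unfolding B_def using B'(1,2) unfolding V'_def
      by (auto simp: pairwise_insert orthogonal_def inner_commute)
    moreover have "\<forall>b\<in>B. norm b = 1 \<and> (\<exists>c. M *v b = c *\<^sub>R b)"
      unfolding B_def using B'(3) nv Mv by blast
    moreover have "V \<subseteq> span B"
    proof
      fix x assume x: "x \<in> V"
      define y where "y = x - (v \<bullet> x) *\<^sub>R v"
      have "y \<in> V'" unfolding V'_def y_def using x vV less.prems(2) vv
        by (simp add: subspace_diff subspace_mul inner_diff_right)
      then have "y \<in> span B" using B'(4) unfolding B_def by (meson in_mono span_mono subset_insertI)
      moreover have "(v \<bullet> x) *\<^sub>R v \<in> span B" unfolding B_def by (simp add: span_base span_mul)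
      ultimately have "y + (v \<bullet> x) *\<^sub>R v \<in> span B" by (rule span_add)
      then show "x \<in> span B" unfolding y_def by simp
    qed
    ultimately show ?thesis by blast
  qed
qed

definition diagm :: "real^'n \<Rightarrow> real^'n^'n" where
  "diagm d = (\<chi> i j. if i = j then d$i else 0)"

theorem spectral:
  fixes M :: "real^'n^'n"
  assumes sym: "transpose M = M"
  shows "\<exists>Q e. orthogonal_matrix Q \<and> M = Q ** diagm e ** transpose Q"
proof -
  obtain B where B: "pairwise orthogonal B" "\<forall>b\<in>B. norm b = 1 \<and> (\<exists>c. M *v b = c *\<^sub>R b)"
    "UNIV \<subseteq> span B"
    using spectral_aux[OF sym refl subspace_UNIV] by blast
  have ind: "independent B"
    using B(1,2) by (intro pairwise_orthogonal_independent) auto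
  have finB: "finite B" using ind by (rule independent_imp_finite)
  have "card B = CARD('n)"
  proof -
    have "span B = UNIV" using B(3) by auto
    then have "dim (UNIV :: (real^'n) set) = card B" using dim_span_eq_card_independent[OF ind] by simp
    then show ?thesis by simp
  qed
  then obtain g where g: "bij_betw g (UNIV::'n set) B"
    using finite_same_card_bij[of "UNIV::'n set" B] finB by auto
  have gB: "g j \<in> B" for j using g by (auto simp: bij_betw_def)
  have ginj: "g j = g k \<Longrightarrow> j = k" for j k using g by (auto simp: bij_betw_def inj_def)
  define c where "c j = (SOME c. M *v g j = c *\<^sub>R g j)" for j
  have Mg: "M *v g j = c j *\<^sub>R g j" for j
    unfolding c_def using B(2) gB[of j] by (metis (mono_tags, lifting) someI_ex)
  have gg: "g j \<bullet> g k = (if j = k then 1 else 0)" for j k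
  proof (cases "j = k")
    case True then show ?thesis using B(2) gB[of j] by (simp add: norm_eq_1)
  next
    case False
    then have "g j \<noteq> g k" using ginj by blast
    then show ?thesis using B(1) gB[of j] gB[of k] False by (auto simp: pairwise_def orthogonal_def)
  qed
  define Q where "Q = (\<chi> i j. g j $ i)"
  define e where "e = (\<chi> j. c j)"
  have QtQ: "transpose Q ** Q = mat 1"
  proof -
    have gg': "(\<Sum>k\<in>UNIV. g j $ k * g j' $ k) = (if j = j' then 1 else 0)" for j j'
      using gg[of j j'] by (simp add: inner_vec_def)
    show ?thesis by (simp add: Q_def transpose_def matrix_matrix_mult_def mat_def vec_eq_iff gg')
  qed
  then have oQ: "orthogonal_matrix Q" by (simp add: orthogonal_matrix)
  then have QQt: "Q ** transpose Q = mat 1" by (simp add: orthogonal_matrix_def)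
  have MQ: "M ** Q = Q ** diagm e"
  proof -
    have "(M ** Q) $ i $ j = (Q ** diagm e) $ i $ j" for i j
    proof -
      have "(M ** Q) $ i $ j = (M *v g j) $ i"
        by (simp add: Q_def matrix_matrix_mult_def matrix_vector_mult_def)
      also have "\<dots> = c j * g j $ i" by (simp add: Mg)
      also have "\<dots> = (Q ** diagm e) $ i $ j"
        by (simp add: Q_def diagm_def e_def matrix_matrix_mult_def if_distrib cong: if_cong)
      finally show ?thesis .
    qed
    then show ?thesis by (simp add: vec_eq_iff)
  qed
  have "M = M ** (Q ** transpose Q)" by (simp add: QQt)
  also have "\<dots> = Q ** diagm e ** transpose Q" by (simp add: matrix_mul_assoc MQ)
  finally show ?thesis using oQ by blast
qed


lemma poly_lin_aux: "[:a:] * [:-c, 1:] * [:b:] = smult (a*b) [:0,1::real:] - [:a*c*b:]"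
  by (simp add: poly_eq_iff coeff_pCons split: nat.split)

lemma const_poly_sum: "(\<Sum>k\<in>A. [:f k:]) = [:\<Sum>k\<in>A. f k :: real:]"
  by (induction A rule: infinite_finite_induct) auto

lemma QDQt_entry:
  "(Q ** diagm d ** transpose Q) $ i $ j = (\<Sum>k\<in>UNIV. Q$i$k * d$k * Q$j$k)"
  by (simp add: matrix_matrix_mult_def diagm_def transpose_def if_distrib sum.delta cong: if_cong)

lemma cp_conj:
  fixes Q :: "real^'n^'n" and d :: "real^'n"
  assumes oQ: "orthogonal_matrix Q"
  shows "char_poly (Q ** diagm d ** transpose Q) = (\<Prod>i\<in>UNIV. [:-(d$i), 1:])"
proof -
  define Qp where "Qp = (\<chi> i j. [:Q$i$j:])"
  define B where "B = (\<chi> i j. if i = j then [:-(d$i), 1:] else (0 :: real poly))"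
  have QQt: "Q ** transpose Q = mat 1" using oQ by (simp add: orthogonal_matrix_def)
  have orth: "(\<Sum>k\<in>UNIV. Q$i$k * Q$j$k) = (if i = j then 1 else 0)" for i j
    using arg_cong[OF QQt, of "\<lambda>A. A$i$j"] by (simp add: matrix_matrix_mult_def transpose_def mat_def)
  have QpQpt: "Qp ** transpose Qp = mat 1"
  proof -
    have "(Qp ** transpose Qp)$i$j = (mat 1 :: real poly^'n^'n)$i$j" for i j
    proof -
      have "(Qp ** transpose Qp)$i$j = (\<Sum>k\<in>UNIV. [:Q$i$k * Q$j$k:])"
        by (simp add: Qp_def matrix_matrix_mult_def transpose_def mult.commute)
      also have "\<dots> = [:if i = j then 1 else 0:]" by (simp add: const_poly_sum orth)
      finally show ?thesis by (simp add: mat_def)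
    qed
    then show ?thesis by (simp add: vec_eq_iff)
  qed
  have eq1: "(\<chi> i j. (if i = j then [:0, 1:] else 0) - [:(Q ** diagm d ** transpose Q) $ i $ j:])
      = Qp ** B ** transpose Qp"
  proof -
    have "(Qp ** B ** transpose Qp)$i$j = (if i = j then [:0, 1:] else 0) - [:(Q ** diagm d ** transpose Q) $ i $ j:]" for i j
    proof -
      have "(Qp ** B ** transpose Qp)$i$j = (\<Sum>l\<in>UNIV. [:Q$i$l:] * [:-(d$l), 1:] * [:Q$j$l:])"
        by (simp add: Qp_def B_def matrix_matrix_mult_def transpose_def if_distrib sum.delta cong: if_cong)
      also have "\<dots> = (\<Sum>l\<in>UNIV. smult (Q$i$l * Q$j$l) [:0,1:] - [:Q$i$l * d$l * Q$j$l:])"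
        by (rule sum.cong[OF refl], rule poly_lin_aux)
      also have "\<dots> = smult (\<Sum>l\<in>UNIV. Q$i$l * Q$j$l) [:0,1:] - [:\<Sum>l\<in>UNIV. Q$i$l * d$l * Q$j$l:]"
        by (simp only: sum_subtractf smult_sum[symmetric] const_poly_sum)
      also have "\<dots> = (if i = j then [:0, 1:] else 0) - [:(Q ** diagm d ** transpose Q) $ i $ j:]"
        by (simp add: orth QDQt_entry)
      finally show ?thesis .
    qed
    then show ?thesis by (simp add: vec_eq_iff)
  qed
  have "char_poly (Q ** diagm d ** transpose Q) = det (Qp ** B ** transpose Qp)"
    unfolding char_poly_def eq1 ..
  also have "\<dots> = det B * det (Qp ** transpose Qp)"
    by (simp add: det_mul det_transpose)
  also have "\<dots> = det B" by (simp add: QpQpt)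
  also have "\<dots> = (\<Prod>i\<in>UNIV. [:-(d$i), 1:])"
    by (subst det_diagonal) (auto simp: B_def)
  finally show ?thesis .
qed

lemma sum_singleton_mset: "(\<Sum>i\<in>A. {#f i#}) = image_mset f (mset_set A)"
  by (induction A rule: infinite_finite_induct) auto

lemma proots_cp:
  "proots (\<Prod>i\<in>(UNIV::'n::finite set). [:-(d$i), 1::real:]) = image_mset (\<lambda>i. d$i) (mset_set UNIV)"
proof -
  have "proots (\<Prod>i\<in>(UNIV::'n set). [:-(d$i), 1::real:]) = (\<Sum>i\<in>UNIV. proots [:-(d$i), 1:])"
    by (rule proots_prod) simp
  also have "\<dots> = (\<Sum>i\<in>UNIV. {#d$i#})" by simp
  also have "\<dots> = image_mset (\<lambda>i. d$i) (mset_set UNIV)"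
    by (rule sum_singleton_mset)
  finally show ?thesis .
qed


lemma rank_bij:
  "bij_betw (\<lambda>i::'p::{finite,linorder}. card {j. j < i}) UNIV {..<CARD('p)}"
proof -
  let ?r = "\<lambda>i::'p. card {j. j < i}"
  have lt: "?r i < ?r i'" if "i < i'" for i i'
    using that by (intro psubset_card_mono) auto
  have inj: "inj ?r"
  proof (rule injI)
    fix i i' assume "?r i = ?r i'"
    then show "i = i'" using lt[of i i'] lt[of i' i] by (metis less_irrefl neqE)
  qed
  have sub: "range ?r \<subseteq> {..<CARD('p)}"
  proof
    fix k assume "k \<in> range ?r"
    then obtain i where "k = ?r i" by auto
    moreover have "card {j. j < i} < card (UNIV::'p set)"
      by (intro psubset_card_mono) auto
    ultimately show "k \<in> {..<CARD('p)}" by simp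
  qed
  have "card (range ?r) = CARD('p)" using inj by (simp add: card_image)
  then have "range ?r = {..<CARD('p)}" using sub by (intro card_subset_eq) auto
  then show ?thesis using inj by (simp add: bij_betw_def)
qed

lemma eigvals_perm:
  fixes M :: "real^('p::{finite,linorder})^('p::{finite,linorder})" and d :: "real^('p::{finite,linorder})"
  assumes pr: "proots (char_poly M) = image_mset (\<lambda>i. d$i) (mset_set UNIV)"
  shows "\<exists>\<sigma>. \<sigma> permutes UNIV \<and> eigvals M = (\<chi> i. d$(\<sigma> i))"
proof -
  define n where "n = CARD('p)"
  define \<rho> where "\<rho> i = card {j. j < i}" for i :: 'p
  have b\<rho>: "bij_betw \<rho> UNIV {..<n}" unfolding \<rho>_def n_def by (rule rank_bij)
  define \<rho>' where "\<rho>' = the_inv_into UNIV \<rho>"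
  have b\<rho>': "bij_betw \<rho>' {..<n} UNIV" unfolding \<rho>'_def by (rule bij_betw_the_inv_into[OF b\<rho>])
  have \<rho>'\<rho>: "\<rho>' (\<rho> i) = i" for i unfolding \<rho>'_def
    using b\<rho> by (simp add: bij_betw_def the_inv_into_f_f)
  define D where "D = proots (char_poly M)"
  define L where "L = rev (sorted_list_of_multiset D)"
  define xs where "xs = map (\<lambda>k. d$(\<rho>' k)) [0..<n]"
  have "mset xs = image_mset (\<lambda>k. d$(\<rho>' k)) (mset_set {..<n})"
    unfolding xs_def by (simp add: atLeast_upt[symmetric] lessThan_atLeast0)
  also have "\<dots> = image_mset (\<lambda>i. d$i) (image_mset \<rho>' (mset_set {..<n}))"
    by (simp add: multiset.map_comp o_def)
  also have "image_mset \<rho>' (mset_set {..<n}) = mset_set UNIV"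
    using b\<rho>' by (simp add: image_mset_mset_set bij_betw_def)
  finally have mxs: "mset xs = D" unfolding D_def pr by simp
  have mL: "mset L = D" unfolding L_def by simp
  have lL: "length L = n" using arg_cong[OF mL, of size]
    unfolding D_def pr n_def by (simp add: size_mset[symmetric] del: size_mset)
  obtain f where f: "bij_betw f {..<length L} {..<length xs}" "\<And>k. k < length L \<Longrightarrow> L ! k = xs ! f k"
    using permutation_Ex_bij[of L xs] mL mxs by auto
  have lxs: "length xs = n" unfolding xs_def by simp
  define \<sigma> where "\<sigma> = \<rho>' \<circ> f \<circ> \<rho>"
  have "bij_betw \<sigma> UNIV UNIV" unfolding \<sigma>_def
    using b\<rho> f(1) b\<rho>' lL lxs by (metis bij_betw_trans)
  then have \<sigma>p: "\<sigma> permutes UNIV" by (intro bij_imp_permutes) auto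
  have "eigvals M $ i = d $ (\<sigma> i)" for i
  proof -
    have ri: "\<rho> i < n" using b\<rho> by (auto simp: bij_betw_def)
    have fri: "f (\<rho> i) < n" using f(1) ri lL lxs by (auto simp: bij_betw_def)
    have "eigvals M $ i = L ! \<rho> i" unfolding eigvals_def L_def D_def \<rho>_def by simp
    also have "\<dots> = xs ! f (\<rho> i)" using f(2) ri lL by simp
    also have "\<dots> = d $ (\<sigma> i)" unfolding xs_def \<sigma>_def using fri by simp
    finally show ?thesis .
  qed
  then show ?thesis using \<sigma>p by (auto simp: vec_eq_iff)
qed

lemma eigvals_conj:
  fixes Q :: "real^('p::{finite,linorder})^('p::{finite,linorder})" and d :: "real^('p::{finite,linorder})"
  assumes "orthogonal_matrix Q"
  shows "\<exists>\<sigma>. \<sigma> permutes UNIV \<and> eigvals (Q ** diagm d ** transpose Q) = (\<chi> i. d$(\<sigma> i))"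
  by (rule eigvals_perm) (simp add: cp_conj[OF assms] proots_cp)


lemma mm_rdistrib: "(A + B) ** (C :: real^'n^'k) = A ** C + B ** (C :: real^'n^'k)"
  by (simp add: matrix_matrix_mult_def vec_eq_iff sum.distrib distrib_right)

lemma conj_lin: "transpose Q ** (u *\<^sub>R A + v *\<^sub>R B) ** (Q :: real^'n^'n) =
   u *\<^sub>R (transpose Q ** A ** Q) + v *\<^sub>R (transpose Q ** B ** Q)"
  by (simp add: matrix_add_ldistrib mm_rdistrib scalar_matrix_assoc matrix_scalar_ac)

lemma diagm_add: "diagm (a + b) = diagm a + diagm b"
  by (simp add: diagm_def vec_eq_iff)

lemma diagm_scale: "diagm (c *\<^sub>R a) = c *\<^sub>R diagm a"
  by (simp add: diagm_def vec_eq_iff)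

lemma transpose_diagm: "transpose (diagm x) = diagm x"
  by (simp add: diagm_def transpose_def vec_eq_iff)

lemma conj_add: "Q ** diagm (a + b) ** transpose Q = Q ** diagm a ** transpose Q + Q ** diagm b ** transpose Q"
  by (simp add: diagm_add matrix_add_ldistrib mm_rdistrib)

lemma conj_scale: "Q ** diagm (c *\<^sub>R a) ** transpose Q = c *\<^sub>R (Q ** diagm a ** transpose Q)"
  by (simp add: diagm_scale scalar_matrix_assoc matrix_scalar_ac)

lemma conj_sym: "transpose (Q ** diagm x ** transpose Q) = Q ** diagm x ** transpose Q"
  by (simp add: matrix_transpose_mul transpose_diagm matrix_mul_assoc)


lemma perm_matrix_vec: "perm_matrix \<sigma> *v x = (\<chi> i. x$(\<sigma> i))"
proof -
  have "(perm_matrix \<sigma> *v x) $ i = x$(\<sigma> i)" for i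
  proof -
    have "(perm_matrix \<sigma> *v x) $ i = (\<Sum>j\<in>UNIV. (if \<sigma> i = j then 1 else 0) * x$j)"
      by (simp add: perm_matrix_def matrix_vector_mult_def)
    also have "\<dots> = (\<Sum>j\<in>UNIV. if j = \<sigma> i then x$j else 0)"
      by (intro sum.cong) auto
    also have "\<dots> = x$(\<sigma> i)" using sum.delta[of UNIV "\<sigma> i" "\<lambda>j. x $ j"] by simp
    finally show ?thesis .
  qed
  then show ?thesis by (simp add: vec_eq_iff)
qed

lemma Cperm:
  fixes f :: "nat \<Rightarrow> real^'q::finite \<Rightarrow> 'z::euclidean_space \<Rightarrow> real"
  assumes pi: "\<And>i. i \<in> {1..r} \<Longrightarrow> perm_invariant (f i)"
    and xz: "(x, z) \<in> convex hull {(x, z). \<forall>i\<in>{1..r}. f i x z \<le> 1}"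
    and \<sigma>: "\<sigma> permutes UNIV"
  shows "((\<chi> i. x$(\<sigma> i)), z) \<in> convex hull {(x, z). \<forall>i\<in>{1..r}. f i x z \<le> 1}"
proof -
  let ?S = "{(x, z). \<forall>i\<in>{1..r}. f i x z \<le> 1}"
  define h where "h p = (perm_matrix \<sigma> *v fst p, snd p)" for p :: "(real^'q) \<times> 'z"
  have lin: "linear h" unfolding h_def
    by (intro linearI) (auto simp: matrix_vector_right_distrib matrix_vector_mult_scaleR)
  have "h ` ?S \<subseteq> ?S"
  proof
    fix y assume "y \<in> h ` ?S"
    then obtain x' z' where xz': "(x', z') \<in> ?S" "y = h (x', z')" by auto
    have P: "is_perm_matrix (perm_matrix \<sigma>)" using \<sigma> unfolding is_perm_matrix_def by blast
    have "f i (perm_matrix \<sigma> *v x') z' = f i x' z'" if "i \<in> {1..r}" for i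
      using pi[OF that] P unfolding perm_invariant_def by blast
    then show "y \<in> ?S" using xz' unfolding h_def by auto
  qed
  then have "convex hull (h ` ?S) \<subseteq> convex hull ?S" by (rule hull_mono)
  then have "h ` (convex hull ?S) \<subseteq> convex hull ?S"
    by (simp only: convex_hull_linear_image[OF lin])
  then have "h (x, z) \<in> convex hull ?S" using xz by blast
  then show ?thesis by (simp add: h_def perm_matrix_vec)
qed

lemma Cperm_inv:
  fixes f :: "nat \<Rightarrow> real^'q::finite \<Rightarrow> 'z::euclidean_space \<Rightarrow> real"
  assumes pi: "\<And>i. i \<in> {1..r} \<Longrightarrow> perm_invariant (f i)"
    and xz: "((\<chi> i. d$(\<sigma> i)), z) \<in> convex hull {(x, z). \<forall>i\<in>{1..r}. f i x z \<le> 1}"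
    and \<sigma>: "\<sigma> permutes UNIV"
  shows "(d, z) \<in> convex hull {(x, z). \<forall>i\<in>{1..r}. f i x z \<le> 1}"
proof -
  have "((\<chi> i. (\<chi> i. d$(\<sigma> i)) $ (inv \<sigma> i)), z) \<in> convex hull {(x, z). \<forall>i\<in>{1..r}. f i x z \<le> 1}"
    by (rule Cperm[OF pi xz permutes_inv[OF \<sigma>]])
  moreover have "(\<chi> i. (\<chi> i. d$(\<sigma> i)) $ (inv \<sigma> i)) = d"
    using permutes_inverses(1)[OF \<sigma>] by (simp add: vec_eq_iff)
  ultimately show ?thesis by simp
qed

lemma schur_C:
  fixes f :: "nat \<Rightarrow> real^'p::{finite,linorder} \<Rightarrow> 'z::euclidean_space \<Rightarrow> real"
    and A Q :: "real^('p::{finite,linorder})^('p::{finite,linorder})"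
  assumes pi: "\<And>i. i \<in> {1..r} \<Longrightarrow> perm_invariant (f i)"
    and sym: "transpose A = A"
    and Az: "(eigvals A, z) \<in> convex hull {(x, z). \<forall>i\<in>{1..r}. f i x z \<le> 1}"
    and oQ: "orthogonal_matrix Q"
  shows "((\<chi> j. (transpose Q ** A ** Q)$j$j), z) \<in> convex hull {(x, z). \<forall>i\<in>{1..r}. f i x z \<le> 1}"
proof -
  let ?C = "convex hull {(x, z). \<forall>i\<in>{1..r}. f i x z \<le> 1}"
  obtain U dA where oU: "orthogonal_matrix U" and AU: "A = U ** diagm dA ** transpose U"
    using spectral[OF sym] by blast
  obtain \<sigma> where \<sigma>: "\<sigma> permutes UNIV" "eigvals A = (\<chi> i. dA$(\<sigma> i))"
    using eigvals_conj[OF oU, of dA] AU by auto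
  have dz: "(dA, z) \<in> ?C" using Cperm_inv[OF pi _ \<sigma>(1)] Az \<sigma>(2) by simp
  define W where "W = transpose Q ** U"
  have oW: "orthogonal_matrix W" unfolding W_def
    by (intro orthogonal_matrix_mul oU) (simp add: oQ)
  have QAQ: "transpose Q ** A ** Q = W ** diagm dA ** transpose W"
    unfolding AU W_def by (simp add: matrix_transpose_mul matrix_mul_assoc)
  define S where "S = (\<chi> j k. (W$j$k)^2)"
  have WWt: "W ** transpose W = mat 1" and WtW: "transpose W ** W = mat 1"
    using oW by (auto simp: orthogonal_matrix_def)
  have row: "(\<Sum>k\<in>UNIV. S$j$k) = 1" for j
    using arg_cong[OF WWt, of "\<lambda>M. M$j$j"]
    by (simp add: S_def matrix_matrix_mult_def transpose_def mat_def power2_eq_square)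
  have col: "(\<Sum>j\<in>UNIV. S$j$k) = 1" for k
    using arg_cong[OF WtW, of "\<lambda>M. M$k$k"]
    by (simp add: S_def matrix_matrix_mult_def transpose_def mat_def power2_eq_square)
  have nn: "S$j$k \<ge> 0" for j k by (simp add: S_def)
  have eq: "(\<chi> j. (transpose Q ** A ** Q)$j$j) = S *v dA"
    by (simp add: QAQ QDQt_entry S_def matrix_vector_mult_def vec_eq_iff power2_eq_square ac_simps)
  have hull: "S *v dA \<in> convex hull ((\<lambda>\<sigma>. \<chi> i. dA$(\<sigma> i)) ` {\<sigma>. \<sigma> permutes UNIV})"
    by (rule ds_in_hull[OF nn row col])
  have "convex hull ((\<lambda>\<sigma>. \<chi> i. dA$(\<sigma> i)) ` {\<sigma>. \<sigma> permutes UNIV}) \<subseteq> {y. (y, z) \<in> ?C}"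
  proof (rule hull_minimal)
    show "(\<lambda>\<sigma>. \<chi> i. dA$(\<sigma> i)) ` {\<sigma>. \<sigma> permutes UNIV} \<subseteq> {y. (y, z) \<in> ?C}"
      using Cperm[OF pi dz] by auto
    show "convex {y. (y, z) \<in> ?C}"
    proof (rule convexI)
      fix x y and u v :: real
      assume "x \<in> {y. (y, z) \<in> ?C}" "y \<in> {y. (y, z) \<in> ?C}" "0 \<le> u" "0 \<le> v" "u + v = 1"
      then have "u *\<^sub>R (x, z) + v *\<^sub>R (y, z) \<in> ?C"
        by (intro convexD[OF convex_convex_hull]) auto
      moreover have "u *\<^sub>R (x, z) + v *\<^sub>R (y, z) = (u *\<^sub>R x + v *\<^sub>R y, z)"
        using \<open>u + v = 1\<close> by (simp add: scaleR_left_distrib[symmetric])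
      ultimately show "u *\<^sub>R x + v *\<^sub>R y \<in> {y. (y, z) \<in> ?C}" by simp
    qed
  qed
  then show ?thesis using hull eq by auto
qed

lemma transpose_lin: "transpose (u *\<^sub>R A + v *\<^sub>R B) = u *\<^sub>R transpose A + v *\<^sub>R transpose (B::real^'n^'m)"
  by (simp add: transpose_def vec_eq_iff)

theorem mainTheorem10:
  fixes f :: "nat \<Rightarrow> real^'p::{finite,linorder} \<Rightarrow> 'z::euclidean_space \<Rightarrow> real"
    and r :: nat
  assumes "\<And>i. i \<in> {1..r} \<Longrightarrow> perm_invariant (f i)"
  shows "convex hull {(M, z). symmetric_matrix M \<and> (\<forall>i\<in>{1..r}. f i (eigvals M) z \<le> 1)}
       = {(M, z). symmetric_matrix M \<and>
            (eigvals M, z) \<in> convex hull {(x, z). \<forall>i\<in>{1..r}. f i x z \<le> 1}}"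
proof -
  note pi = assms
  let ?S = "{(x, z). \<forall>i\<in>{1..r}. f i x z \<le> 1}"
  let ?C = "convex hull ?S"
  let ?Sb = "{(M, z). symmetric_matrix M \<and> (\<forall>i\<in>{1..r}. f i (eigvals M) z \<le> 1)}"
  let ?T = "{(M, z). symmetric_matrix M \<and> (eigvals M, z) \<in> ?C}"
  have "convex hull ?Sb \<subseteq> ?T"
  proof (rule hull_minimal)
    show "?Sb \<subseteq> ?T" by (auto intro: hull_inc)
    show "convex ?T"
    proof (rule convexI)
      fix X Y and u v :: real
      assume X: "X \<in> ?T" and Y: "Y \<in> ?T" and u: "0 \<le> u" and v: "0 \<le> v" and uv: "u + v = 1"
      obtain A z1 where AX: "X = (A, z1)" by fastforce
      obtain B z2 where BY: "Y = (B, z2)" by fastforce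
      have sA: "transpose A = A" and Az: "(eigvals A, z1) \<in> ?C"
        using X unfolding AX symmetric_matrix_def by auto
      have sB: "transpose B = B" and Bz: "(eigvals B, z2) \<in> ?C"
        using Y unfolding BY symmetric_matrix_def by auto
      define N where "N = u *\<^sub>R A + v *\<^sub>R B"
      have sN: "transpose N = N" unfolding N_def transpose_lin sA sB ..
      obtain Q e where oQ: "orthogonal_matrix Q" and NQ: "N = Q ** diagm e ** transpose Q"
        using spectral[OF sN] by blast
      obtain \<sigma> where \<sigma>: "\<sigma> permutes UNIV" "eigvals N = (\<chi> i. e$(\<sigma> i))"
        using eigvals_conj[OF oQ, of e] NQ by auto
      define a where "a = (\<chi> j. (transpose Q ** A ** Q)$j$j)"
      define b where "b = (\<chi> j. (transpose Q ** B ** Q)$j$j)"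
      have aC: "(a, z1) \<in> ?C" unfolding a_def by (rule schur_C[OF pi sA Az oQ])
      have bC: "(b, z2) \<in> ?C" unfolding b_def by (rule schur_C[OF pi sB Bz oQ])
      have QtQ: "transpose Q ** Q = mat 1" using oQ by (simp add: orthogonal_matrix_def)
      have "transpose Q ** N ** Q = diagm e"
      proof -
        have "transpose Q ** N ** Q = (transpose Q ** Q) ** diagm e ** (transpose Q ** Q)"
          unfolding NQ by (simp add: matrix_mul_assoc)
        then show ?thesis by (simp add: QtQ)
      qed
      moreover have "transpose Q ** N ** Q = u *\<^sub>R (transpose Q ** A ** Q) + v *\<^sub>R (transpose Q ** B ** Q)"
        unfolding N_def by (rule conj_lin)
      ultimately have e: "e = u *\<^sub>R a + v *\<^sub>R b"
        unfolding a_def b_def by (simp add: vec_eq_iff diagm_def)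
      have "u *\<^sub>R (a, z1) + v *\<^sub>R (b, z2) \<in> ?C"
        using aC bC u v uv by (intro convexD[OF convex_convex_hull])
      then have "(e, u *\<^sub>R z1 + v *\<^sub>R z2) \<in> ?C" by (simp add: e)
      then have "(eigvals N, u *\<^sub>R z1 + v *\<^sub>R z2) \<in> ?C"
        unfolding \<sigma>(2) using Cperm[where f=f and r=r, OF pi _ \<sigma>(1)] by blast
      then show "u *\<^sub>R X + v *\<^sub>R Y \<in> ?T"
        using sN unfolding AX BY N_def symmetric_matrix_def by simp
    qed
  qed
  moreover have "?T \<subseteq> convex hull ?Sb"
  proof
    fix Y assume "Y \<in> ?T"
    then obtain M z where Y: "Y = (M, z)" and sM: "transpose M = M" and Mz: "(eigvals M, z) \<in> ?C"
      unfolding symmetric_matrix_def by auto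
    obtain Q e where oQ: "orthogonal_matrix Q" and MQ: "M = Q ** diagm e ** transpose Q"
      using spectral[OF sM] by blast
    obtain \<sigma> where \<sigma>: "\<sigma> permutes UNIV" "eigvals M = (\<chi> i. e$(\<sigma> i))"
      using eigvals_conj[OF oQ, of e] MQ by auto
    have ez: "(e, z) \<in> ?C" using Cperm_inv[OF pi _ \<sigma>(1)] Mz \<sigma>(2) by simp
    define \<Phi> where "\<Phi> p = (Q ** diagm (fst p) ** transpose Q, snd p)" for p :: "(real, 'p) vec \<times> 'z"
    have lin: "linear \<Phi>"
    proof (intro linearI)
      fix p q :: "(real, 'p) vec \<times> 'z" and c :: real
      show "\<Phi> (p + q) = \<Phi> p + \<Phi> q"
        unfolding \<Phi>_def by (simp add: conj_add)
      show "\<Phi> (c *\<^sub>R p) = c *\<^sub>R \<Phi> p"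
        unfolding \<Phi>_def by (simp add: conj_scale)
    qed
    have "\<Phi> ` ?S \<subseteq> ?Sb"
    proof
      fix y assume "y \<in> \<Phi> ` ?S"
      then obtain x' z' where xz': "(x', z') \<in> ?S" and y: "y = \<Phi> (x', z')" by auto
      obtain \<tau> where \<tau>: "\<tau> permutes UNIV" "eigvals (Q ** diagm x' ** transpose Q) = (\<chi> i. x'$(\<tau> i))"
        using eigvals_conj[OF oQ, of x'] by auto
      have P: "is_perm_matrix (perm_matrix \<tau>)" using \<tau>(1) unfolding is_perm_matrix_def by blast
      have "f i (\<chi> i. x'$(\<tau> i)) z' = f i x' z'" if "i \<in> {1..r}" for i
        using pi[OF that] P unfolding perm_invariant_def perm_matrix_vec[symmetric] by blast
      moreover have "symmetric_matrix (Q ** diagm x' ** transpose Q)"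
        unfolding symmetric_matrix_def
        by (rule conj_sym)
      ultimately show "y \<in> ?Sb" using xz' \<tau>(2) unfolding y \<Phi>_def by auto
    qed
    then have "convex hull (\<Phi> ` ?S) \<subseteq> convex hull ?Sb" by (rule hull_mono)
    then have "\<Phi> ` ?C \<subseteq> convex hull ?Sb"
      by (simp only: convex_hull_linear_image[OF lin])
    then have "\<Phi> (e, z) \<in> convex hull ?Sb" using ez by blast
    then show "Y \<in> convex hull ?Sb" unfolding Y \<Phi>_def MQ by simp
  qed
  ultimately show ?thesis by (rule antisym)
qed

end
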